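(* Suppose $a\in C^2(\mathbb{R})$. Let $\tilde\alpha\in\mathbb{R}^2$ be such that $a'(\tilde\alpha_2)>0$. Given $s_0,t_0>0$ sufficiently small depending on the function $a$ and $\tilde\alpha_2$, the matrix $A$ is invertible. Moreover, for any $0<\epsilon<1$, the unique solution $\gamma_0^{\epsilon}$ of the system \begin{equation*} L^{\epsilon}(\gamma) = 0 \end{equation*} is non-negative componentwise. Further, there exist constants $0<\lambda<\Lambda<\infty$ depending on the function $a$, $\tilde\alpha_2$, $s_0$ and $t_0$ such that \begin{equation*} \lambda\epsilon \leq[\gamma_0^{\epsilon}]_i \leq \Lambda\epsilon \ \text{ for }\ i=1,2,3,4. \end{equation*}
   Context: Let $a:\mathbb{R}\to\mathbb{R}$, $F(\xi)=\int_0^\xi a(s)\,ds$, and for $\alpha\in\mathbb{R}^2$ let $$P_1^{\alpha}(u,v):=\begin{pmatrix} u-\alpha_1 & v-\alpha_2 \\ a(v)-a(\alpha_2) & u-\alpha_1\\ (u-\alpha_1)(a(v)-a(\alpha_2)) & \frac{(u-\alpha_1)^2}{2}+F(v)-F(\alpha_2)-a(\alpha_2)(v-\alpha_2) \end{pmatrix}.$$ Given $s_0,t_0>0$ set $\zeta_1:=P_1^{\tilde\alpha}(\tilde\alpha_1+s_0,\tilde\alpha_2)$, $\zeta_2:=P_1^{\tilde\alpha}(\tilde\alpha_1-s_0,\tilde\alpha_2)$, $\zeta_3:=P_1^{\tilde\alpha}(\tilde\alpha_1,\tilde\alpha_2+t_0)$, $\zeta_4:=P_1^{\tilde\alpha}(\tilde\alpha_1,\tilde\alpha_2-t_0)$.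 Let $D_1,D_2,D_3$ denote the $(1,2)$, $(2,3)$, $(1,3)$ row-minors of a $3\times 2$ matrix, respectively. Let $A\in M^{4\times 4}$ be the matrix whose $j$-th column is $(D_1(\zeta_j),D_2(\zeta_j),D_3(\zeta_j),1)^T$ for $j=1,2,3,4$, and for $\epsilon>0$, $\gamma\in\mathbb{R}^4$ define $L^{\epsilon}(\gamma):=A\gamma-(0,0,0,\epsilon)^T$. *)

theory Defs
  imports "HOL-Analysis.Analysis"
begin

definition Fint :: "(real \<Rightarrow> real) \<Rightarrow> real \<Rightarrow> real" where
  "Fint a \<xi> = (if 0 \<le> \<xi> then integral {0..\<xi>} a else - integral {\<xi>..0} a)"

definition P1 :: "(real \<Rightarrow> real) \<Rightarrow> real^2 \<Rightarrow> real \<Rightarrow> real \<Rightarrow> real^2^3" where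
  "P1 a \<alpha> u v = vector [
     vector [u - \<alpha>$1, v - \<alpha>$2],
     vector [a v - a (\<alpha>$2), u - \<alpha>$1],
     vector [(u - \<alpha>$1) * (a v - a (\<alpha>$2)),
             (u - \<alpha>$1)^2 / 2 + Fint a v - Fint a (\<alpha>$2) - a (\<alpha>$2) * (v - \<alpha>$2)]]"

definition D1 :: "real^2^3 \<Rightarrow> real" where
  "D1 M = M$1$1 * M$2$2 - M$1$2 * M$2$1"
definition D2 :: "real^2^3 \<Rightarrow> real" where
  "D2 M = M$2$1 * M$3$2 - M$2$2 * M$3$1"
definition D3 :: "real^2^3 \<Rightarrow> real" where
  "D3 M = M$1$1 * M$3$2 - M$1$2 * M$3$1"

definition zeta :: "(real \<Rightarrow> real) \<Rightarrow> real^2 \<Rightarrow> real \<Rightarrow> real \<Rightarrow> 4 \<Rightarrow> real^2^3" where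
  "zeta a \<alpha> s0 t0 j =
     (if j = 1 then P1 a \<alpha> (\<alpha>$1 + s0) (\<alpha>$2)
      else if j = 2 then P1 a \<alpha> (\<alpha>$1 - s0) (\<alpha>$2)
      else if j = 3 then P1 a \<alpha> (\<alpha>$1) (\<alpha>$2 + t0)
      else P1 a \<alpha> (\<alpha>$1) (\<alpha>$2 - t0))"

definition Amat :: "(real \<Rightarrow> real) \<Rightarrow> real^2 \<Rightarrow> real \<Rightarrow> real \<Rightarrow> real^4^4" where
  "Amat a \<alpha> s0 t0 = (\<chi> i j. (vector [D1 (zeta a \<alpha> s0 t0 j), D2 (zeta a \<alpha> s0 t0 j),
                                  D3 (zeta a \<alpha> s0 t0 j), 1] :: real^4) $ i)"

definition Leps :: "(real \<Rightarrow> real) \<Rightarrow> real^2 \<Rightarrow> real \<Rightarrow> real \<Rightarrow> real \<Rightarrow> real^4 \<Rightarrow> real^4" where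
  "Leps a \<alpha> s0 t0 \<epsilon> \<gamma> = Amat a \<alpha> s0 t0 *v \<gamma> - vector [0, 0, 0, \<epsilon>]"

end

theory Submission
  imports Defs
begin

lemma vector_4 [simp]:
 "(vector [w,x,y,z] ::('a::zero)^4)$1 = w"
 "(vector [w,x,y,z] ::('a::zero)^4)$2 = x"
 "(vector [w,x,y,z] ::('a::zero)^4)$3 = y"
 "(vector [w,x,y,z] ::('a::zero)^4)$4 = z"
  unfolding vector_def by simp_all

lemma Leps_eq:
  "Leps a \<alpha> s t e g = 0 \<longleftrightarrow>
    (s * s * (g$1) + s * s * (g$2) - t*(a(\<alpha>$2+t) - a(\<alpha>$2))*g$3 + t*(a(\<alpha>$2-t) - a(\<alpha>$2))*g$4 = 0 \<and>
     (a(\<alpha>$2+t) - a(\<alpha>$2))*(Fint a (\<alpha>$2+t) - Fint a (\<alpha>$2) - a(\<alpha>$2)*t)*g$3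
     + (a(\<alpha>$2-t) - a(\<alpha>$2))*(Fint a (\<alpha>$2-t) - Fint a (\<alpha>$2) + a(\<alpha>$2)*t)*g$4 = 0 \<and>
     s^3/2*g$1 - s^3/2*g$2 = 0 \<and>
     g$1+g$2+g$3+g$4 = e)"
  unfolding Leps_def Amat_def zeta_def P1_def D1_def D2_def D3_def
  by (simp add: vec_eq_iff forall_4 sum_4 matrix_vector_mult_def algebra_simps power2_eq_square power3_eq_cube)

lemma solve:
  fixes s t p q G H e x1 x2 x3 x4 k m N :: real
  assumes s: "s>0" and t: "t>0" and p: "p>0" and q: "q<0" and G: "G>0" and H: "H>0"
    and k: "k = p*G/(-q*H)" and m: "m = t*(p - q*k)/(2 * s * s)" and N: "N = 2*m+1+k"
  shows "k > 0" "m > 0" "N > 0"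
    "(s * s * x1 + s * s * x2 - t*p*x3 + t*q*x4 = 0 \<and> p*G*x3 + q*H*x4 = 0 \<and>
      s^3/2*x1 - s^3/2*x2 = 0 \<and> x1+x2+x3+x4 = e) \<longleftrightarrow>
     (x1 = e*m/N \<and> x2 = e*m/N \<and> x3 = e/N \<and> x4 = e*k/N)"
proof -
  have qH: "-q*H > 0" using q H by (simp add: mult_neg_pos)
  show kp: "k > 0" unfolding k using p G q H qH by (intro divide_pos_pos mult_pos_pos) auto
  have "q*k < 0" using q kp by (simp add: mult_neg_pos)
  then have "p - q*k > 0" using p by simp
  then show mp: "m > 0" unfolding m using s t by simp
  show Np: "N > 0" unfolding N using mp kp by simp
  show "(s * s * x1 + s * s * x2 - t*p*x3 + t*q*x4 = 0 \<and> p*G*x3 + q*H*x4 = 0 \<and>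
      s^3/2*x1 - s^3/2*x2 = 0 \<and> x1+x2+x3+x4 = e) \<longleftrightarrow>
     (x1 = e*m/N \<and> x2 = e*m/N \<and> x3 = e/N \<and> x4 = e*k/N)"
  proof
    assume h: "s * s * x1 + s * s * x2 - t*p*x3 + t*q*x4 = 0 \<and> p*G*x3 + q*H*x4 = 0 \<and>
      s^3/2*x1 - s^3/2*x2 = 0 \<and> x1+x2+x3+x4 = e"
    have x12: "x2 = x1" using h s by simp
    have e2: "(q*H)*x4 = -(p*G*x3)" using h by linarith
    have qH0: "q*H \<noteq> 0" using q H by simp
    have "x4 = -(p*G*x3)/(q*H)" using e2 qH0 by (metis minus_divide_left nonzero_mult_div_cancel_left)
    then have x4: "x4 = k*x3" unfolding k using qH0 by (simp add: field_simps)
    have e1: "(2 * s * s)*x1 = t*(p - q*k)*x3" using h x12 x4 by (simp add: algebra_simps)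
    have ss: "2 * s * s \<noteq> 0" using s by simp
    have x1: "x1 = m*x3" unfolding m using e1 ss by (simp add: field_simps)
    have x3: "x3 * N = e" using h x12 x4 x1 unfolding N by (simp add: algebra_simps)
    have x3': "x3 = e/N" using x3 Np by (simp add: field_simps)
    show "x1 = e*m/N \<and> x2 = e*m/N \<and> x3 = e/N \<and> x4 = e*k/N"
      using x1 x12 x4 x3' by simp
  next
    assume h: "x1 = e*m/N \<and> x2 = e*m/N \<and> x3 = e/N \<and> x4 = e*k/N"
    have sm: "2 * s * s * m = t*(p - q*k)" unfolding m using s by simp
    have "s * s * x1 + s * s * x2 - t*p*x3 + t*q*x4 = (e/N)*(2 * s * s * m - t*(p - q*k))"
      using h by (simp add: algebra_simps)
    then have 1: "s * s * x1 + s * s * x2 - t*p*x3 + t*q*x4 = 0" using sm by simp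
    have qHk: "q*H*k = -(p*G)" unfolding k using q H by (simp add: field_simps)
    have "p*G*x3 + q*H*x4 = (e/N)*(p*G + q*H*k)" using h by (simp add: algebra_simps)
    then have 2: "p*G*x3 + q*H*x4 = 0" using qHk by simp
    have "x1+x2+x3+x4 = (e/N)*(2*m+1+k)" using h by (simp add: algebra_simps add_divide_distrib)
    then have 4: "x1+x2+x3+x4 = e" using Np unfolding N by simp
    show "s * s * x1 + s * s * x2 - t*p*x3 + t*q*x4 = 0 \<and> p*G*x3 + q*H*x4 = 0 \<and>
      s^3/2*x1 - s^3/2*x2 = 0 \<and> x1+x2+x3+x4 = e" using 1 2 4 h by simp
  qed
qed

lemma Fint_diff:
  assumes c: "continuous_on UNIV a" and xy: "x \<le> y"
  shows "Fint a y - Fint a x = integral {x..y} a"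
proof -
  have I: "\<And>u v. a integrable_on {u..v}"
    using c by (meson continuous_on_subset integrable_continuous_real subset_UNIV)
  show ?thesis
  proof (cases "0 \<le> x")
    case True
    then show ?thesis using xy Henstock_Kurzweil_Integration.integral_combine[where f=a and a=0 and c=x and b=y, OF True xy I]
      by (simp add: Fint_def)
  next
    case x: False
    show ?thesis
    proof (cases "0 \<le> y")
      case True
      then show ?thesis using x Henstock_Kurzweil_Integration.integral_combine[where f=a and a=x and c=0 and b=y, OF _ True I]
        by (simp add: Fint_def)
    next
      case False
      then show ?thesis using x Henstock_Kurzweil_Integration.integral_combine[where f=a and a=x and c=y and b=0, OF xy _ I]
        by (simp add: Fint_def)
    qed
  qed
qed

lemma Fint_deriv:
  assumes c: "continuous_on UNIV a"
  shows "(Fint a has_real_derivative a x) (at x)"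
proof -
  let ?g = "\<lambda>y. Fint a (x-1) + integral {x-1..y} a"
  have "(?g has_real_derivative a x) (at x within {x-1..x+1})"
  proof -
    have "((\<lambda>y. integral {x-1..y} a) has_real_derivative a x) (at x within {x-1..x+1})"
      by (rule integral_has_real_derivative) (rule continuous_on_subset[OF c], simp, simp)
    from DERIV_add[OF DERIV_const[of "Fint a (x-1)"] this] show ?thesis by simp
  qed
  moreover have "x \<in> interior {x-1..x+1}" by simp
  ultimately have "(?g has_real_derivative a x) (at x)"
    by (metis at_within_interior)
  then show ?thesis
  proof (rule has_field_derivative_transform_within_open[where S="{x-1<..<x+1}"])
    fix y assume "y \<in> {x-1<..<x+1}"
    then show "?g y = Fint a y" using Fint_diff[OF c, where x="x-1" and y=y] by simp
  qed auto
qed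

theorem lemma16:
  fixes a :: "real \<Rightarrow> real" and \<alpha> :: "real^2"
  assumes "a differentiable_on UNIV"
    and "deriv a differentiable_on UNIV"
    and "continuous_on UNIV (deriv (deriv a))"
    and "deriv a (\<alpha>$2) > 0"
  shows "\<exists>\<delta>>0. \<forall>s0 t0. 0 < s0 \<and> s0 < \<delta> \<and> 0 < t0 \<and> t0 < \<delta> \<longrightarrow>
           invertible (Amat a \<alpha> s0 t0) \<and>
           (\<forall>\<epsilon>. 0 < \<epsilon> \<and> \<epsilon> < 1 \<longrightarrow> (\<exists>!\<gamma>. Leps a \<alpha> s0 t0 \<epsilon> \<gamma> = 0)) \<and>
           (\<forall>\<epsilon> \<gamma>. 0 < \<epsilon> \<and> \<epsilon> < 1 \<and> Leps a \<alpha> s0 t0 \<epsilon> \<gamma> = 0 \<longrightarrow> (\<forall>i. 0 \<le> \<gamma>$i)) \<and>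
           (\<exists>lam Lam. 0 < lam \<and> lam < Lam \<and>
              (\<forall>\<epsilon> \<gamma>. 0 < \<epsilon> \<and> \<epsilon> < 1 \<and> Leps a \<alpha> s0 t0 \<epsilon> \<gamma> = 0 \<longrightarrow>
                 (\<forall>i. lam * \<epsilon> \<le> \<gamma>$i \<and> \<gamma>$i \<le> Lam * \<epsilon>)))"
  
proof -
  let ?y = "\<alpha>$2"
  let ?b = "a (\<alpha>$2)"
  have c: "continuous_on UNIV a"
    using assms(1) differentiable_imp_continuous_on by blast
  have "a differentiable (at ?y)" using assms(1) unfolding differentiable_on_def by simp
  then have da: "DERIV a ?y :> deriv a ?y" using DERIV_deriv_iff_real_differentiable by blast
  obtain d1 where d1: "d1 > 0" "\<And>h. h > 0 \<Longrightarrow> h < d1 \<Longrightarrow> a ?y < a (?y + h)"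
    using DERIV_pos_inc_right[OF da assms(4)] by blast
  obtain d2 where d2: "d2 > 0" "\<And>h. h > 0 \<Longrightarrow> h < d2 \<Longrightarrow> a (?y - h) < a ?y"
    using DERIV_pos_inc_left[OF da assms(4)] by blast
  have dF: "\<And>x. DERIV (Fint a) x :> a x" using Fint_deriv[OF c] by blast
  have dG: "\<And>\<tau>. ((\<lambda>\<tau>. Fint a (?y+\<tau>) - Fint a ?y - ?b*\<tau>) has_real_derivative (a (?y+\<tau>) - ?b)) (at \<tau>)"
  proof -
    fix \<tau> :: real
    have "((\<lambda>\<tau>. Fint a (?y+\<tau>)) has_real_derivative a (?y+\<tau>) * (0+1)) (at \<tau>)"
      by (rule DERIV_chain2[OF dF DERIV_add[OF DERIV_const DERIV_ident]])
    then have "((\<lambda>\<tau>. Fint a (?y+\<tau>) - Fint a ?y - ?b*\<tau>) has_real_derivative (a (?y+\<tau>) * (0+1) - 0 - ?b*1)) (at \<tau>)"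
      by (intro DERIV_diff DERIV_const DERIV_cmult DERIV_ident)
    then show "((\<lambda>\<tau>. Fint a (?y+\<tau>) - Fint a ?y - ?b*\<tau>) has_real_derivative (a (?y+\<tau>) - ?b)) (at \<tau>)"
      by simp
  qed
  have dH: "\<And>\<tau>. ((\<lambda>\<tau>. Fint a (?y-\<tau>) - Fint a ?y + ?b*\<tau>) has_real_derivative (?b - a (?y-\<tau>))) (at \<tau>)"
  proof -
    fix \<tau> :: real
    have "((\<lambda>\<tau>. Fint a (?y-\<tau>)) has_real_derivative a (?y-\<tau>) * (0-1)) (at \<tau>)"
      by (rule DERIV_chain2[OF dF DERIV_diff[OF DERIV_const DERIV_ident]])
    then have "((\<lambda>\<tau>. Fint a (?y-\<tau>) - Fint a ?y + ?b*\<tau>) has_real_derivative (a (?y-\<tau>) * (0-1) - 0 + ?b*1)) (at \<tau>)"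
      by (intro DERIV_add DERIV_diff DERIV_const DERIV_cmult DERIV_ident)
    then show "((\<lambda>\<tau>. Fint a (?y-\<tau>) - Fint a ?y + ?b*\<tau>) has_real_derivative (?b - a (?y-\<tau>))) (at \<tau>)"
      by simp
  qed
  show ?thesis
  proof (rule exI[where x="min d1 d2"], rule conjI)
    show "min d1 d2 > 0" using d1 d2 by simp
    show "\<forall>s t. 0 < s \<and> s < min d1 d2 \<and> 0 < t \<and> t < min d1 d2 \<longrightarrow> invertible (Amat a \<alpha> s t) \<and>
           (\<forall>\<epsilon>. 0 < \<epsilon> \<and> \<epsilon> < 1 \<longrightarrow> (\<exists>!\<gamma>. Leps a \<alpha> s t \<epsilon> \<gamma> = 0)) \<and>
           (\<forall>\<epsilon> \<gamma>. 0 < \<epsilon> \<and> \<epsilon> < 1 \<and> Leps a \<alpha> s t \<epsilon> \<gamma> = 0 \<longrightarrow> (\<forall>i. 0 \<le> \<gamma>$i)) \<and>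
           (\<exists>lam Lam. 0 < lam \<and> lam < Lam \<and>
              (\<forall>\<epsilon> \<gamma>. 0 < \<epsilon> \<and> \<epsilon> < 1 \<and> Leps a \<alpha> s t \<epsilon> \<gamma> = 0 \<longrightarrow>
                 (\<forall>i. lam * \<epsilon> \<le> \<gamma>$i \<and> \<gamma>$i \<le> Lam * \<epsilon>)))"
    proof (intro allI impI)
    fix s t :: real
    assume st: "0 < s \<and> s < min d1 d2 \<and> 0 < t \<and> t < min d1 d2"
    then have s: "s > 0" and t: "t > 0" and td1: "t < d1" and td2: "t < d2" by auto
    let ?p = "a (?y+t) - ?b"
    let ?q = "a (?y-t) - ?b"
    let ?G = "Fint a (?y+t) - Fint a ?y - ?b*t"
    let ?H = "Fint a (?y-t) - Fint a ?y + ?b*t"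
    have p: "?p > 0" using d1(2)[OF t td1] by simp
    have q: "?q < 0" using d2(2)[OF t td2] by simp
    have G0: "(\<lambda>\<tau>. Fint a (?y+\<tau>) - Fint a ?y - ?b*\<tau>) 0 < (\<lambda>\<tau>. Fint a (?y+\<tau>) - Fint a ?y - ?b*\<tau>) t"
    proof (rule DERIV_pos_imp_increasing_open[OF t])
      fix x :: real assume "0 < x" "x < t"
      then show "\<exists>y. DERIV (\<lambda>\<tau>. Fint a (?y+\<tau>) - Fint a ?y - ?b*\<tau>) x :> y \<and> y > 0"
        using dG[of x] d1(2)[of x] td1 by force
    next
      show "continuous_on {0..t} (\<lambda>\<tau>. Fint a (?y+\<tau>) - Fint a ?y - ?b*\<tau>)"
        using dG by (intro DERIV_atLeastAtMost_imp_continuous_on) blast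
    qed
    have G: "?G > 0" using G0 by simp
    have H0: "(\<lambda>\<tau>. Fint a (?y-\<tau>) - Fint a ?y + ?b*\<tau>) 0 < (\<lambda>\<tau>. Fint a (?y-\<tau>) - Fint a ?y + ?b*\<tau>) t"
    proof (rule DERIV_pos_imp_increasing_open[OF t])
      fix x :: real assume "0 < x" "x < t"
      then show "\<exists>y. DERIV (\<lambda>\<tau>. Fint a (?y-\<tau>) - Fint a ?y + ?b*\<tau>) x :> y \<and> y > 0"
        using dH[of x] d2(2)[of x] td2 by force
    next
      show "continuous_on {0..t} (\<lambda>\<tau>. Fint a (?y-\<tau>) - Fint a ?y + ?b*\<tau>)"
        using dH by (intro DERIV_atLeastAtMost_imp_continuous_on) blast
    qed
    have H: "?H > 0" using H0 by simp
    define k where "k = ?p*?G/(-?q*?H)"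
    define m where "m = t*(?p - ?q*k)/(2 * s * s)"
    define N where "N = 2*m+1+k"
    note sol = solve[OF s t p q G H k_def m_def N_def]
    have key: "\<And>e \<gamma>. Leps a \<alpha> s t e \<gamma> = 0 \<longleftrightarrow>
        (\<gamma>$1 = e*m/N \<and> \<gamma>$2 = e*m/N \<and> \<gamma>$3 = e/N \<and> \<gamma>$4 = e*k/N)"
      unfolding Leps_eq by (rule sol(4))
    have inv: "invertible (Amat a \<alpha> s t)"
      unfolding invertible_left_inverse matrix_left_invertible_ker
    proof (intro allI impI)
      fix x :: "real^4" assume "Amat a \<alpha> s t *v x = 0"
      moreover have "(vector [0,0,0,0] :: real^4) = 0" by (simp add: vec_eq_iff forall_4)
      ultimately have "Leps a \<alpha> s t 0 x = 0" unfolding Leps_def by simp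
      then show "x = 0" using key[of 0 x] by (simp add: vec_eq_iff forall_4)
    qed
    have ex1: "\<forall>e. 0 < e \<and> e < 1 \<longrightarrow> (\<exists>!\<gamma>. Leps a \<alpha> s t e \<gamma> = 0)"
    proof (intro allI impI)
    fix e :: real
    assume e: "0 < e \<and> e < 1"
    show "\<exists>!\<gamma>. Leps a \<alpha> s t e \<gamma> = 0"
    proof (rule ex1I[where a="vector [e*m/N, e*m/N, e/N, e*k/N]"])
      show "Leps a \<alpha> s t e (vector [e*m/N, e*m/N, e/N, e*k/N]) = 0" using key by simp
      fix g assume "Leps a \<alpha> s t e g = 0"
      then show "g = vector [e*m/N, e*m/N, e/N, e*k/N]" using key by (simp add: vec_eq_iff forall_4)
    qed
    qed
    define lo where "lo = min (min m 1) k"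
    define hi where "hi = max (max m 1) k"
    have lo: "lo > 0" unfolding lo_def using sol by simp
    have lohi: "lo \<le> hi" unfolding lo_def hi_def by simp
    have bnd: "\<And>e w. 0 < e \<Longrightarrow> lo \<le> w \<Longrightarrow> w \<le> hi \<Longrightarrow>
        0 \<le> e*w/N \<and> lo/(2*N)*e \<le> e*w/N \<and> e*w/N \<le> 2*hi/N*e"
    proof -
      fix e w :: real assume e: "0 < e" and v: "lo \<le> w" "w \<le> hi"
      have N: "N > 0" using sol by simp
      have "lo/(2*N) \<le> w/N" using lo v N by (simp add: divide_simps)
      then have 1: "lo/(2*N)*e \<le> w/N*e" using e by (intro mult_right_mono) auto
      have "w/N \<le> 2*hi/N" using lo v N by (simp add: divide_simps)
      then have 2: "w/N*e \<le> 2*hi/N*e" using e by (intro mult_right_mono) auto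
      have 3: "0 \<le> e*w/N" using e v lo N by simp
      show "0 \<le> e*w/N \<and> lo/(2*N)*e \<le> e*w/N \<and> e*w/N \<le> 2*hi/N*e" using 1 2 3 by (simp add: mult.commute)
    qed
    have vm: "lo \<le> m" "m \<le> hi" "lo \<le> 1" "1 \<le> hi" "lo \<le> k" "k \<le> hi"
      unfolding lo_def hi_def by auto
    have comp: "\<And>e \<gamma> i. 0 < e \<Longrightarrow> Leps a \<alpha> s t e \<gamma> = 0 \<Longrightarrow>
        0 \<le> \<gamma>$i \<and> lo/(2*N)*e \<le> \<gamma>$i \<and> \<gamma>$i \<le> 2*hi/N*e"
    proof -
      fix e :: real and \<gamma> :: "real^4" and i :: 4
      assume e: "0 < e" and L: "Leps a \<alpha> s t e \<gamma> = 0"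
      have b1: "0 \<le> e*m/N \<and> lo/(2*N)*e \<le> e*m/N \<and> e*m/N \<le> 2*hi/N*e" using bnd[OF e vm(1,2)] .
      have b3: "0 \<le> e*1/N \<and> lo/(2*N)*e \<le> e*1/N \<and> e*1/N \<le> 2*hi/N*e" using bnd[OF e vm(3,4)] .
      have b4: "0 \<le> e*k/N \<and> lo/(2*N)*e \<le> e*k/N \<and> e*k/N \<le> 2*hi/N*e" using bnd[OF e vm(5,6)] .
      show "0 \<le> \<gamma>$i \<and> lo/(2*N)*e \<le> \<gamma>$i \<and> \<gamma>$i \<le> 2*hi/N*e"
        using exhaust_4[of i] key[of e \<gamma>] L b1 b3 b4 by auto
    qed
    have nn: "(\<forall>\<epsilon> \<gamma>. 0 < \<epsilon> \<and> \<epsilon> < 1 \<and> Leps a \<alpha> s t \<epsilon> \<gamma> = 0 \<longrightarrow> (\<forall>i. 0 \<le> \<gamma>$i))"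
      using comp by blast
    have bd: "\<exists>lam Lam. 0 < lam \<and> lam < Lam \<and>
              (\<forall>\<epsilon> \<gamma>. 0 < \<epsilon> \<and> \<epsilon> < 1 \<and> Leps a \<alpha> s t \<epsilon> \<gamma> = 0 \<longrightarrow>
                 (\<forall>i. lam * \<epsilon> \<le> \<gamma>$i \<and> \<gamma>$i \<le> Lam * \<epsilon>))"
    proof (intro exI conjI)
      have N: "N > 0" using sol by simp
      show "0 < lo/(2*N)" using lo N by simp
      show "lo/(2*N) < 2*hi/N" using lo lohi N by (simp add: divide_simps)
      show "\<forall>\<epsilon> \<gamma>. 0 < \<epsilon> \<and> \<epsilon> < 1 \<and> Leps a \<alpha> s t \<epsilon> \<gamma> = 0 \<longrightarrow>
                 (\<forall>i. lo/(2*N) * \<epsilon> \<le> \<gamma>$i \<and> \<gamma>$i \<le> 2*hi/N * \<epsilon>)"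
        using comp by blast
    qed
    show "invertible (Amat a \<alpha> s t) \<and>
           (\<forall>\<epsilon>. 0 < \<epsilon> \<and> \<epsilon> < 1 \<longrightarrow> (\<exists>!\<gamma>. Leps a \<alpha> s t \<epsilon> \<gamma> = 0)) \<and>
           (\<forall>\<epsilon> \<gamma>. 0 < \<epsilon> \<and> \<epsilon> < 1 \<and> Leps a \<alpha> s t \<epsilon> \<gamma> = 0 \<longrightarrow> (\<forall>i. 0 \<le> \<gamma>$i)) \<and>
           (\<exists>lam Lam. 0 < lam \<and> lam < Lam \<and>
              (\<forall>\<epsilon> \<gamma>. 0 < \<epsilon> \<and> \<epsilon> < 1 \<and> Leps a \<alpha> s t \<epsilon> \<gamma> = 0 \<longrightarrow>
                 (\<forall>i. lam * \<epsilon> \<le> \<gamma>$i \<and> \<gamma>$i \<le> Lam * \<epsilon>)))"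
      using inv ex1 nn bd by blast
    qed
  qed
qed

end
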